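(* For every integer $n\geq 1$, $$c_n(231,1243 : 231)=c_n(312,2134 : 312)=\begin{cases}\frac{4k^3+3k^2-k}{6}+1 & \text{if } n=2k,\\ \frac{4k^3+9k^2+5k}{6}+1 & \text{if } n=2k+1.\end{cases}$$
   Context: $S_n$ is the symmetric group on $[n]=\{1,\dots,n\}$, and a permutation $\pi\in S_n$ is written in one-line notation $\pi=\pi_1\pi_2\cdots\pi_n$ with $\pi_i=\pi(i)$. For $\tau\in S_k$, $k\le n$, $\pi$ contains $\tau$ if there are indices $i_1<\dots<i_k$ with $\pi_{i_s}>\pi_{i_t}$ iff $\tau_s>\tau_t$ for all $1\le s<t\le k$; otherwise $\pi$ avoids $\tau$. $\pi^2$ denotes the composition $\pi\circ\pi$. For patterns $\sigma_1,\sigma_2,\rho$, $c_n(\sigma_1,\sigma_2 : \rho)$ denotes the number of permutations $\pi\in S_n$ such that $\pi$ avoids both $\sigma_1$ and $\sigma_2$ and $\pi^2$ avoids $\rho$. *)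

theory Defs
  imports "HOL-Combinatorics.Permutations" Complex_Main
begin

text \<open>Permutations of [n] = {1..n} are functions \<pi> with \<pi> permutes {1..n}.
Patterns \<tau> \<in> S_k are given in one-line notation as lists [\<tau>_1,...,\<tau>_k] (0-indexed).\<close>

definition contains_pat :: "nat \<Rightarrow> (nat \<Rightarrow> nat) \<Rightarrow> nat list \<Rightarrow> bool" where
  "contains_pat n \<pi> \<tau> \<longleftrightarrow>
     (\<exists>f :: nat \<Rightarrow> nat.
        (\<forall>s<length \<tau>. 1 \<le> f s \<and> f s \<le> n) \<and>
        (\<forall>s t. s < t \<and> t < length \<tau> \<longrightarrow> f s < f t) \<and>
        (\<forall>s t. s < t \<and> t < length \<tau> \<longrightarrow> (\<pi> (f s) > \<pi> (f t) \<longleftrightarrow> \<tau> ! s > \<tau> ! t)))"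

definition avoids_pat :: "nat \<Rightarrow> (nat \<Rightarrow> nat) \<Rightarrow> nat list \<Rightarrow> bool" where
  "avoids_pat n \<pi> \<tau> \<longleftrightarrow> \<not> contains_pat n \<pi> \<tau>"

definition c_count :: "nat \<Rightarrow> nat list \<Rightarrow> nat list \<Rightarrow> nat list \<Rightarrow> nat" where
  "c_count n \<sigma>1 \<sigma>2 \<rho> = card {\<pi>. \<pi> permutes {1..n} \<and> avoids_pat n \<pi> \<sigma>1 \<and>
       avoids_pat n \<pi> \<sigma>2 \<and> avoids_pat n (\<pi> \<circ> \<pi>) \<rho>}"

end

theory Submission
  imports Defs
begin

definition c231 :: "nat \<Rightarrow> (nat \<Rightarrow> nat) \<Rightarrow> bool" where
  "c231 n s \<longleftrightarrow> (\<exists>x y z. 1 \<le> x \<and> x < y \<and> y < z \<and> z \<le> n \<and> s x \<le> s y \<and> s z < s x \<and> s z < s y)"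
definition c312 :: "nat \<Rightarrow> (nat \<Rightarrow> nat) \<Rightarrow> bool" where
  "c312 n s \<longleftrightarrow> (\<exists>x y z. 1 \<le> x \<and> x < y \<and> y < z \<and> z \<le> n \<and> s y < s x \<and> s z < s x \<and> s y \<le> s z)"
definition c1243 :: "nat \<Rightarrow> (nat \<Rightarrow> nat) \<Rightarrow> bool" where
  "c1243 n s \<longleftrightarrow> (\<exists>a b c d. 1 \<le> a \<and> a < b \<and> b < c \<and> c < d \<and> d \<le> n \<and>
     s a \<le> s b \<and> s a \<le> s c \<and> s a \<le> s d \<and> s b \<le> s c \<and> s b \<le> s d \<and> s d < s c)"
definition c2134 :: "nat \<Rightarrow> (nat \<Rightarrow> nat) \<Rightarrow> bool" where
  "c2134 n s \<longleftrightarrow> (\<exists>a b c d. 1 \<le> a \<and> a < b \<and> b < c \<and> c < d \<and> d \<le> n \<and>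
     s b < s a \<and> s a \<le> s c \<and> s a \<le> s d \<and> s b \<le> s c \<and> s b \<le> s d \<and> s c \<le> s d)"


lemma u231: "contains_pat n s [2,3,1] \<longleftrightarrow> c231 n s"
proof
  assume "contains_pat n s [2,3,1]"
  then obtain f where A: "\<forall>i<length [2,3,1::nat]. 1 \<le> f i \<and> f i \<le> n" and B: "\<forall>i j. i < j \<and> j < length [2,3,1::nat] \<longrightarrow> f i < f j"
    and C: "\<forall>i j. i < j \<and> j < length [2,3,1::nat] \<longrightarrow> (s (f i) > s (f j) \<longleftrightarrow> [2,3,1::nat] ! i > [2,3,1] ! j)"
    unfolding contains_pat_def by blast
  from A[rule_format, of 0] A[rule_format, of 1] A[rule_format, of 2] B[rule_format, of 0 1] B[rule_format, of 1 2] C[rule_format, of 0 1] C[rule_format, of 0 2] C[rule_format, of 1 2]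
  show "c231 n s" unfolding c231_def
    by (intro exI[of _ "f 0"] exI[of _ "f 1"] exI[of _ "f 2"]) (simp add: numeral_2_eq_2 numeral_3_eq_3)
next
  assume "c231 n s"
  then obtain x y z where H: "1 \<le> x \<and> x < y \<and> y < z \<and> z \<le> n \<and> s x \<le> s y \<and> s z < s x \<and> s z < s y"
    unfolding c231_def by blast
  have 1: "\<forall>i<length [2,3,1::nat]. 1 \<le> [x,y,z] ! i \<and> [x,y,z] ! i \<le> n"
  proof (intro allI impI)
    fix i assume "i < length [2,3,1::nat]"
    then have "i = 0 \<or> i = 1 \<or> i = 2" by auto
    then show "1 \<le> [x,y,z] ! i \<and> [x,y,z] ! i \<le> n" using H by auto
  qed
  have 2: "\<forall>i j. i < j \<and> j < length [2,3,1::nat] \<longrightarrow> [x,y,z] ! i < [x,y,z] ! j"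
  proof (intro allI impI)
    fix i j assume "i < j \<and> j < length [2,3,1::nat]"
    then have "i = 0 \<and> j = 1 \<or> i = 0 \<and> j = 2 \<or> i = 1 \<and> j = 2" by auto
    then show "[x,y,z] ! i < [x,y,z] ! j" using H by auto
  qed
  have 3: "\<forall>i j. i < j \<and> j < length [2,3,1::nat] \<longrightarrow> (s ([x,y,z] ! i) > s ([x,y,z] ! j)) = ([2,3,1::nat] ! i > [2,3,1] ! j)"
  proof (intro allI impI)
    fix i j assume "i < j \<and> j < length [2,3,1::nat]"
    then have "i = 0 \<and> j = 1 \<or> i = 0 \<and> j = 2 \<or> i = 1 \<and> j = 2" by auto
    then show "(s ([x,y,z] ! i) > s ([x,y,z] ! j)) = ([2,3,1::nat] ! i > [2,3,1] ! j)" using H by auto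
  qed
  show "contains_pat n s [2,3,1]" unfolding contains_pat_def
    using 1 2 3 by blast
qed

lemma u312: "contains_pat n s [3,1,2] \<longleftrightarrow> c312 n s"
proof
  assume "contains_pat n s [3,1,2]"
  then obtain f where A: "\<forall>i<length [3,1,2::nat]. 1 \<le> f i \<and> f i \<le> n" and B: "\<forall>i j. i < j \<and> j < length [3,1,2::nat] \<longrightarrow> f i < f j"
    and C: "\<forall>i j. i < j \<and> j < length [3,1,2::nat] \<longrightarrow> (s (f i) > s (f j) \<longleftrightarrow> [3,1,2::nat] ! i > [3,1,2] ! j)"
    unfolding contains_pat_def by blast
  from A[rule_format, of 0] A[rule_format, of 1] A[rule_format, of 2] B[rule_format, of 0 1] B[rule_format, of 1 2] C[rule_format, of 0 1] C[rule_format, of 0 2] C[rule_format, of 1 2]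
  show "c312 n s" unfolding c312_def
    by (intro exI[of _ "f 0"] exI[of _ "f 1"] exI[of _ "f 2"]) (simp add: numeral_2_eq_2 numeral_3_eq_3)
next
  assume "c312 n s"
  then obtain x y z where H: "1 \<le> x \<and> x < y \<and> y < z \<and> z \<le> n \<and> s y < s x \<and> s z < s x \<and> s y \<le> s z"
    unfolding c312_def by blast
  have 1: "\<forall>i<length [3,1,2::nat]. 1 \<le> [x,y,z] ! i \<and> [x,y,z] ! i \<le> n"
  proof (intro allI impI)
    fix i assume "i < length [3,1,2::nat]"
    then have "i = 0 \<or> i = 1 \<or> i = 2" by auto
    then show "1 \<le> [x,y,z] ! i \<and> [x,y,z] ! i \<le> n" using H by auto
  qed
  have 2: "\<forall>i j. i < j \<and> j < length [3,1,2::nat] \<longrightarrow> [x,y,z] ! i < [x,y,z] ! j"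
  proof (intro allI impI)
    fix i j assume "i < j \<and> j < length [3,1,2::nat]"
    then have "i = 0 \<and> j = 1 \<or> i = 0 \<and> j = 2 \<or> i = 1 \<and> j = 2" by auto
    then show "[x,y,z] ! i < [x,y,z] ! j" using H by auto
  qed
  have 3: "\<forall>i j. i < j \<and> j < length [3,1,2::nat] \<longrightarrow> (s ([x,y,z] ! i) > s ([x,y,z] ! j)) = ([3,1,2::nat] ! i > [3,1,2] ! j)"
  proof (intro allI impI)
    fix i j assume "i < j \<and> j < length [3,1,2::nat]"
    then have "i = 0 \<and> j = 1 \<or> i = 0 \<and> j = 2 \<or> i = 1 \<and> j = 2" by auto
    then show "(s ([x,y,z] ! i) > s ([x,y,z] ! j)) = ([3,1,2::nat] ! i > [3,1,2] ! j)" using H by auto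
  qed
  show "contains_pat n s [3,1,2]" unfolding contains_pat_def
    using 1 2 3 by blast
qed

lemma u1243: "contains_pat n s [1,2,4,3] \<longleftrightarrow> c1243 n s"
proof
  assume "contains_pat n s [1,2,4,3]"
  then obtain f where A: "\<forall>i<length [1,2,4,3::nat]. 1 \<le> f i \<and> f i \<le> n" and B: "\<forall>i j. i < j \<and> j < length [1,2,4,3::nat] \<longrightarrow> f i < f j"
    and C: "\<forall>i j. i < j \<and> j < length [1,2,4,3::nat] \<longrightarrow> (s (f i) > s (f j) \<longleftrightarrow> [1,2,4,3::nat] ! i > [1,2,4,3] ! j)"
    unfolding contains_pat_def by blast
  from A[rule_format, of 0] A[rule_format, of 1] A[rule_format, of 2] A[rule_format, of 3] B[rule_format, of 0 1] B[rule_format, of 1 2] B[rule_format, of 2 3] C[rule_format, of 0 1] C[rule_format, of 0 2] C[rule_format, of 0 3] C[rule_format, of 1 2] C[rule_format, of 1 3] C[rule_format, of 2 3]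
  show "c1243 n s" unfolding c1243_def
    by (intro exI[of _ "f 0"] exI[of _ "f 1"] exI[of _ "f 2"] exI[of _ "f 3"]) (simp add: numeral_2_eq_2 numeral_3_eq_3)
next
  assume "c1243 n s"
  then obtain a b c d where H: "1 \<le> a \<and> a < b \<and> b < c \<and> c < d \<and> d \<le> n \<and>
     s a \<le> s b \<and> s a \<le> s c \<and> s a \<le> s d \<and> s b \<le> s c \<and> s b \<le> s d \<and> s d < s c"
    unfolding c1243_def by blast
  have 1: "\<forall>i<length [1,2,4,3::nat]. 1 \<le> [a,b,c,d] ! i \<and> [a,b,c,d] ! i \<le> n"
  proof (intro allI impI)
    fix i assume "i < length [1,2,4,3::nat]"
    then have "i = 0 \<or> i = 1 \<or> i = 2 \<or> i = 3" by auto
    then show "1 \<le> [a,b,c,d] ! i \<and> [a,b,c,d] ! i \<le> n" using H by auto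
  qed
  have 2: "\<forall>i j. i < j \<and> j < length [1,2,4,3::nat] \<longrightarrow> [a,b,c,d] ! i < [a,b,c,d] ! j"
  proof (intro allI impI)
    fix i j assume "i < j \<and> j < length [1,2,4,3::nat]"
    then have "i = 0 \<and> j = 1 \<or> i = 0 \<and> j = 2 \<or> i = 0 \<and> j = 3 \<or> i = 1 \<and> j = 2 \<or> i = 1 \<and> j = 3 \<or> i = 2 \<and> j = 3" by auto
    then show "[a,b,c,d] ! i < [a,b,c,d] ! j" using H by auto
  qed
  have 3: "\<forall>i j. i < j \<and> j < length [1,2,4,3::nat] \<longrightarrow> (s ([a,b,c,d] ! i) > s ([a,b,c,d] ! j)) = ([1,2,4,3::nat] ! i > [1,2,4,3] ! j)"
  proof (intro allI impI)
    fix i j assume "i < j \<and> j < length [1,2,4,3::nat]"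
    then have "i = 0 \<and> j = 1 \<or> i = 0 \<and> j = 2 \<or> i = 0 \<and> j = 3 \<or> i = 1 \<and> j = 2 \<or> i = 1 \<and> j = 3 \<or> i = 2 \<and> j = 3" by auto
    then show "(s ([a,b,c,d] ! i) > s ([a,b,c,d] ! j)) = ([1,2,4,3::nat] ! i > [1,2,4,3] ! j)" using H by auto
  qed
  show "contains_pat n s [1,2,4,3]" unfolding contains_pat_def
    using 1 2 3 by blast
qed

lemma u2134: "contains_pat n s [2,1,3,4] \<longleftrightarrow> c2134 n s"
proof
  assume "contains_pat n s [2,1,3,4]"
  then obtain f where A: "\<forall>i<length [2,1,3,4::nat]. 1 \<le> f i \<and> f i \<le> n" and B: "\<forall>i j. i < j \<and> j < length [2,1,3,4::nat] \<longrightarrow> f i < f j"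
    and C: "\<forall>i j. i < j \<and> j < length [2,1,3,4::nat] \<longrightarrow> (s (f i) > s (f j) \<longleftrightarrow> [2,1,3,4::nat] ! i > [2,1,3,4] ! j)"
    unfolding contains_pat_def by blast
  from A[rule_format, of 0] A[rule_format, of 1] A[rule_format, of 2] A[rule_format, of 3] B[rule_format, of 0 1] B[rule_format, of 1 2] B[rule_format, of 2 3] C[rule_format, of 0 1] C[rule_format, of 0 2] C[rule_format, of 0 3] C[rule_format, of 1 2] C[rule_format, of 1 3] C[rule_format, of 2 3]
  show "c2134 n s" unfolding c2134_def
    by (intro exI[of _ "f 0"] exI[of _ "f 1"] exI[of _ "f 2"] exI[of _ "f 3"]) (simp add: numeral_2_eq_2 numeral_3_eq_3)
next
  assume "c2134 n s"
  then obtain a b c d where H: "1 \<le> a \<and> a < b \<and> b < c \<and> c < d \<and> d \<le> n \<and>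
     s b < s a \<and> s a \<le> s c \<and> s a \<le> s d \<and> s b \<le> s c \<and> s b \<le> s d \<and> s c \<le> s d"
    unfolding c2134_def by blast
  have 1: "\<forall>i<length [2,1,3,4::nat]. 1 \<le> [a,b,c,d] ! i \<and> [a,b,c,d] ! i \<le> n"
  proof (intro allI impI)
    fix i assume "i < length [2,1,3,4::nat]"
    then have "i = 0 \<or> i = 1 \<or> i = 2 \<or> i = 3" by auto
    then show "1 \<le> [a,b,c,d] ! i \<and> [a,b,c,d] ! i \<le> n" using H by auto
  qed
  have 2: "\<forall>i j. i < j \<and> j < length [2,1,3,4::nat] \<longrightarrow> [a,b,c,d] ! i < [a,b,c,d] ! j"
  proof (intro allI impI)
    fix i j assume "i < j \<and> j < length [2,1,3,4::nat]"
    then have "i = 0 \<and> j = 1 \<or> i = 0 \<and> j = 2 \<or> i = 0 \<and> j = 3 \<or> i = 1 \<and> j = 2 \<or> i = 1 \<and> j = 3 \<or> i = 2 \<and> j = 3" by auto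
    then show "[a,b,c,d] ! i < [a,b,c,d] ! j" using H by auto
  qed
  have 3: "\<forall>i j. i < j \<and> j < length [2,1,3,4::nat] \<longrightarrow> (s ([a,b,c,d] ! i) > s ([a,b,c,d] ! j)) = ([2,1,3,4::nat] ! i > [2,1,3,4] ! j)"
  proof (intro allI impI)
    fix i j assume "i < j \<and> j < length [2,1,3,4::nat]"
    then have "i = 0 \<and> j = 1 \<or> i = 0 \<and> j = 2 \<or> i = 0 \<and> j = 3 \<or> i = 1 \<and> j = 2 \<or> i = 1 \<and> j = 3 \<or> i = 2 \<and> j = 3" by auto
    then show "(s ([a,b,c,d] ! i) > s ([a,b,c,d] ! j)) = ([2,1,3,4::nat] ! i > [2,1,3,4] ! j)" using H by auto
  qed
  show "contains_pat n s [2,1,3,4]" unfolding contains_pat_def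
    using 1 2 3 by blast
qed

definition P :: "nat \<Rightarrow> nat \<Rightarrow> nat \<Rightarrow> nat \<Rightarrow> nat" where
 "P n p q i = (if i = 0 \<or> n < i then i else if i < p then p - i else if i < q then n + p - i else i + p - q)"
definition T :: "nat \<Rightarrow> nat \<Rightarrow> nat \<Rightarrow> nat \<Rightarrow> nat" where
 "T n p q i = (if i = 0 \<or> n < i then i else if i < p then i else if i \<le> p + (n - q) then 2*p + (n - q) - i
     else if i < q then i else n + q - i)"

lemma perm_in: "s permutes {1..n} \<Longrightarrow> 1 \<le> x \<Longrightarrow> x \<le> n \<Longrightarrow> 1 \<le> s x \<and> s x \<le> n"
  using permutes_in_image[of s "{1..n}" x] by auto

lemma perm_inj: "s permutes S \<Longrightarrow> s x = s y \<Longrightarrow> x = y"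
  using permutes_inj[of s S] by (auto dest: injD)

lemma perm_out: fixes s :: "nat \<Rightarrow> nat" assumes "s permutes {1..n}" "x = 0 \<or> n < x" shows "s x = x"
proof -
  have "x \<notin> {1..n}" using assms(2) by auto
  then show ?thesis using permutes_not_in[OF assms(1)] by blast
qed

lemma perm_ex: "s permutes {1..n} \<Longrightarrow> 1 \<le> v \<Longrightarrow> v \<le> n \<Longrightarrow> \<exists>x. 1 \<le> x \<and> x \<le> n \<and> s x = v"
  using permutes_image[of s "{1..n}"] by (metis atLeastAtMost_iff imageE)

lemma L_prefix:
  assumes perm: "s permutes {1..n}" and h: "\<not> c231 n s" and sq: "s q = n" and q: "1 \<le> q" "q \<le> n"
  shows "(\<forall>x. 1 \<le> x \<and> x < q \<longrightarrow> s x < q) \<and> (\<forall>y. 1 \<le> y \<and> y \<le> n \<and> s y < q \<longrightarrow> y < q)"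
proof -
  have P1: "s x < q" if x: "1 \<le> x" "x < q" for x
  proof -
    have sx: "1 \<le> s x" "s x \<le> n" using perm_in[OF perm, of x] x q by auto
    have sxn: "s x \<noteq> n" using perm_inj[OF perm, of x q] sq x by auto
    have gt: "s x < s z" if z: "q < z" "z \<le> n" for z
    proof (rule ccontr)
      assume "\<not> s x < s z"
      moreover have "s z \<noteq> s x" using perm_inj[OF perm, of z x] x z by auto
      ultimately have "s z < s x" by auto
      then have "c231 n s" unfolding c231_def using x z sx sq
        by (intro exI[of _ x] exI[of _ q] exI[of _ z]) auto
      then show False using h by blast
    qed
    have sub: "s ` {q<..n} \<subseteq> {s x<..<n}"
    proof
      fix v assume "v \<in> s ` {q<..n}"
      then obtain z where z: "q < z" "z \<le> n" "v = s z" by auto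
      have "s z \<le> n" using perm_in[OF perm, of z] z q by auto
      moreover have "s z \<noteq> n" using perm_inj[OF perm, of z q] sq z by auto
      ultimately show "v \<in> {s x<..<n}" using gt[OF z(1,2)] z by auto
    qed
    have "card (s ` {q<..n}) = card {q<..n}"
      using card_image[of s "{q<..n}"] permutes_inj_on[OF perm] by auto
    then have "n - q \<le> n - Suc (s x)" using card_mono[OF _ sub] by auto
    then show "s x < q" using sx sxn q by auto
  qed
  have img: "s ` {1..<q} = {1..<q}"
  proof (rule endo_inj_surj)
    show "s ` {1..<q} \<subseteq> {1..<q}" using P1 perm_in[OF perm] q by fastforce
    show "inj_on s {1..<q}" using permutes_inj_on[OF perm] .
  qed auto
  have P2: "y < q" if y: "1 \<le> y" "y \<le> n" "s y < q" for y
  proof -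
    have "s y \<in> {1..<q}" using perm_in[OF perm, of y] y by auto
    then obtain x where "x \<in> {1..<q}" "s x = s y" using img by (metis imageE)
    then show ?thesis using perm_inj[OF perm, of x y] by auto
  qed
  show ?thesis using P1 P2 by blast
qed

lemma DEC:
  fixes f :: "nat \<Rightarrow> nat"
  assumes dec: "\<And>x y. lo \<le> x \<Longrightarrow> x < y \<Longrightarrow> y \<le> hi \<Longrightarrow> f y < f x"
    and rng: "\<And>x. lo \<le> x \<Longrightarrow> x \<le> hi \<Longrightarrow> lo' \<le> f x \<and> f x \<le> hi'"
    and eq: "lo' + hi = hi' + lo"
    and x: "lo \<le> x" "x \<le> hi"
  shows "f x + x = hi' + lo"
proof -
  have step: "\<And>d. x0 + d \<le> hi \<Longrightarrow> lo \<le> x0 \<Longrightarrow> f (x0 + d) + d \<le> f x0" for x0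
  proof -
    fix d show "x0 + d \<le> hi \<Longrightarrow> lo \<le> x0 \<Longrightarrow> f (x0 + d) + d \<le> f x0"
    proof (induction d)
      case 0 then show ?case by simp
    next
      case (Suc d)
      then have "f (x0 + Suc d) < f (x0 + d)" using dec[of "x0 + d" "x0 + Suc d"] by auto
      then show ?case using Suc by auto
    qed
  qed
  have a: "f (x + (hi - x)) + (hi - x) \<le> f x" using step[of x "hi - x"] x by auto
  have b: "f (lo + (x - lo)) + (x - lo) \<le> f lo" using step[of lo "x - lo"] x by auto
  have "lo' \<le> f hi" using rng[of hi] x by auto
  moreover have "f lo \<le> hi'" using rng[of lo] x by auto
  ultimately show ?thesis using a b x eq by auto
qed

lemma INC:
  fixes f :: "nat \<Rightarrow> nat"
  assumes inc: "\<And>x y. lo \<le> x \<Longrightarrow> x < y \<Longrightarrow> y \<le> hi \<Longrightarrow> f x < f y"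
    and rng: "\<And>x. lo \<le> x \<Longrightarrow> x \<le> hi \<Longrightarrow> lo' \<le> f x \<and> f x \<le> hi'"
    and eq: "hi' + lo = lo' + hi"
    and x: "lo \<le> x" "x \<le> hi"
  shows "f x + lo = x + lo'"
proof -
  have step: "\<And>d. x0 + d \<le> hi \<Longrightarrow> lo \<le> x0 \<Longrightarrow> f x0 + d \<le> f (x0 + d)" for x0
  proof -
    fix d show "x0 + d \<le> hi \<Longrightarrow> lo \<le> x0 \<Longrightarrow> f x0 + d \<le> f (x0 + d)"
    proof (induction d)
      case 0 then show ?case by simp
    next
      case (Suc d)
      then have "f (x0 + d) < f (x0 + Suc d)" using inc[of "x0 + d" "x0 + Suc d"] by auto
      then show ?case using Suc by auto
    qed
  qed
  have a: "f x + (hi - x) \<le> f (x + (hi - x))" using step[of x "hi - x"] x by auto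
  have b: "f lo + (x - lo) \<le> f (lo + (x - lo))" using step[of lo "x - lo"] x by auto
  have "f hi \<le> hi'" using rng[of hi] x by auto
  moreover have "lo' \<le> f lo" using rng[of lo] x by auto
  ultimately show ?thesis using a b x eq by auto
qed

lemma P_sq:
  assumes "1 \<le> p" "p < q" "q \<le> n" "n + p + 1 \<le> 2*q"
  shows "P n p q \<circ> P n p q = T n p q"
proof
  fix i show "(P n p q \<circ> P n p q) i = T n p q i"
    using assms unfolding P_def T_def by (auto split: if_splits)
qed

lemma P_inj:
  assumes "1 \<le> p" "p < q" "q \<le> n" "n + p + 1 \<le> 2*q"
  shows "inj (P n p q)"
  unfolding inj_def
  using assms unfolding P_def by (auto split: if_splits)

lemma P_perm:
  assumes "1 \<le> p" "p < q" "q \<le> n" "n + p + 1 \<le> 2*q"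
  shows "P n p q permutes {1..n}"
proof (rule bij_imp_permutes)
  have i: "inj_on (P n p q) {1..n}" using P_inj[OF assms] by (metis inj_on_subset subset_UNIV)
  have s: "P n p q ` {1..n} \<subseteq> {1..n}" using assms unfolding P_def by auto
  show "bij_betw (P n p q) {1..n} {1..n}"
    using endo_inj_surj[OF _ s i] i by (simp add: bij_betw_def)
  show "\<And>x. x \<notin> {1..n} \<Longrightarrow> P n p q x = x" unfolding P_def by auto
qed

lemma P_231:
  assumes "1 \<le> p" "p < q" "q \<le> n" "n + p + 1 \<le> 2*q"
  shows "\<not> c231 n (P n p q)"
  using assms unfolding c231_def P_def by (auto split: if_splits)

lemma T_231:
  assumes "1 \<le> p" "p < q" "q \<le> n" "n + p + 1 \<le> 2*q"
  shows "\<not> c231 n (T n p q)"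
  using assms unfolding c231_def T_def by (auto split: if_splits)

lemma P_1243:
  assumes "1 \<le> p" "p < q" "q \<le> n" "n + p + 1 \<le> 2*q"
  shows "\<not> c1243 n (P n p q)"
  using assms unfolding c1243_def P_def by (auto split: if_splits)

lemma struct_thm:
  fixes s :: "nat \<Rightarrow> nat"
  assumes perm: "s permutes {1..n}" and h1: "\<not> c231 n s" and h2: "\<not> c1243 n s"
    and h3: "\<not> c231 n (s \<circ> s)" and ne: "s n \<noteq> n"
  shows "\<exists>p q. 1 \<le> p \<and> p < q \<and> q \<le> n \<and> n + p + 1 \<le> 2*q \<and> s = P n p q"
proof -
  note inS = perm_in[OF perm]
  note inj = perm_inj[OF perm]
  have n1: "1 \<le> n" using perm_out[OF perm, of n] ne by (cases n) auto
  obtain p where p: "1 \<le> p" "p \<le> n" "s p = n" using perm_ex[OF perm, of n] n1 by auto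
  have pn: "p < n" using p ne by (cases "p = n") auto
  from L_prefix[OF perm h1 p(3) p(1) p(2)]
  have A1: "\<And>x. 1 \<le> x \<Longrightarrow> x < p \<Longrightarrow> s x < p"
   and A2: "\<And>y. 1 \<le> y \<Longrightarrow> y \<le> n \<Longrightarrow> s y < p \<Longrightarrow> y < p" by blast+
  have Bge: "p \<le> s y" if "p < y" "y \<le> n" for y using A2[of y] that p by force
  have Bne: "s y \<noteq> n" if "p \<noteq> y" for y using inj[of y p] p that by auto
  have S2: "s j < s i" if "1 \<le> i" "i < j" "j < p" for i j
  proof (rule ccontr)
    assume "\<not> s j < s i"
    then have "s i \<le> s j" by auto
    moreover have "s i < p" "s j < p" using A1 that by auto
    moreover have "p \<le> s n" using Bge[of n] pn by auto
    moreover have "s n < n" using Bne[of n] inS[of n] pn n1 by auto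
    moreover have "s i \<le> n" "s j \<le> n" using inS that pn by auto
    ultimately have "c1243 n s" unfolding c1243_def using that p pn
      by (intro exI[of _ i] exI[of _ j] exI[of _ p] exI[of _ n]) auto
    then show False using h2 by blast
  qed
  have S3: "s i + i = p" if "1 \<le> i" "i < p" for i
  proof -
    have "s i + i = (p - 1) + 1"
    proof (rule DEC[of 1 "p - 1" s 1 "p - 1"])
      show "\<And>x y. 1 \<le> x \<Longrightarrow> x < y \<Longrightarrow> y \<le> p - 1 \<Longrightarrow> s y < s x" using S2 by auto
      show "\<And>x. 1 \<le> x \<Longrightarrow> x \<le> p - 1 \<Longrightarrow> 1 \<le> s x \<and> s x \<le> p - 1"
        using A1 inS pn by fastforce
    qed (use that in auto)
    then show ?thesis using that by auto
  qed
  obtain q where q: "1 \<le> q" "q \<le> n" "s q = p" using perm_ex[OF perm, of p] p by auto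
  have pq: "p < q"
  proof -
    have "q \<noteq> p" using p q pn by auto
    moreover have "\<not> q < p" using A1[of q] q by auto
    ultimately show ?thesis by auto
  qed
  have Cgt: "p < s y" if "p < y" "y \<le> n" "y \<noteq> q" for y
    using Bge[OF that(1,2)] inj[of y q] q that by force
  have S5: "s y < s x" if "p < x" "x < y" "y < q" for x y
  proof (rule ccontr)
    assume "\<not> s y < s x"
    then have "s x \<le> s y" by auto
    moreover have "p < s x" "p < s y" using Cgt that q by auto
    ultimately have "c231 n s" unfolding c231_def using that q p
      by (intro exI[of _ x] exI[of _ y] exI[of _ q]) auto
    then show False using h1 by blast
  qed
  have tperm: "(s \<circ> s) permutes {1..n}" using permutes_compose[OF perm perm] .
  have tq: "(s \<circ> s) q = n" using q p by auto
  note LP4 = L_prefix[of "s \<circ> s" n q, OF tperm h3 tq q(1) q(2)]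
  have LP: "(\<forall>x. 1 \<le> x \<and> x < q \<longrightarrow> s (s x) < q) \<and> (\<forall>y. 1 \<le> y \<and> y \<le> n \<and> s (s y) < q \<longrightarrow> y < q)"
    using LP4 unfolding comp_def by blast
  then have B1: "\<And>x. 1 \<le> x \<Longrightarrow> x < q \<Longrightarrow> s (s x) < q"
   and B2: "\<And>y. 1 \<le> y \<Longrightarrow> y \<le> n \<Longrightarrow> s (s y) < q \<Longrightarrow> y < q" by blast+
  have S7: "s n < q" using B1[of p] p pq by auto
  have noq: "s y \<noteq> q" if "q < y" "y \<le> n" for y
  proof
    assume "s y = q"
    then have "s (s y) < q" using q pq by auto
    then show False using B2[of y] that q by auto
  qed
  have S8: "s y < q" if "q < y" "y \<le> n" for y
  proof (rule ccontr)
    assume "\<not> s y < q"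
    then have "q < s y" using noq[OF that] by auto
    then have "q < y \<and> y \<le> n \<and> q < s y" using that by auto
    from ex_has_least_nat[of "\<lambda>w. q < w \<and> w \<le> n \<and> q < s w", OF this, of s]
    obtain w where w: "q < w" "w \<le> n" "q < s w"
      and wmin: "\<And>y. q < y \<and> y \<le> n \<and> q < s y \<Longrightarrow> s w \<le> s y" by blast
    have wn: "w < n" using w S7 by (cases "w = n") auto
    have swn: "s w \<le> n" using inS[of w] w q by auto
    have v: "1 \<le> s w - 1" "s w - 1 \<le> n" using w pq p swn by auto
    obtain x2 where x2: "1 \<le> x2" "x2 \<le> n" "s x2 = s w - 1" using perm_ex[OF perm v] by blast
    have "p < x2"
    proof -
      have "\<not> x2 < p" using A1[of x2] x2 w pq by auto
      moreover have "x2 \<noteq> p" using p x2 swn by auto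
      ultimately show ?thesis by auto
    qed
    moreover have "x2 < q"
    proof -
      have "x2 \<noteq> q" using q x2 w pq by auto
      moreover have "\<not> q < x2"
      proof
        assume qx: "q < x2"
        show False
        proof (cases "s w - 1 = q")
          case True then show False using noq[OF qx x2(2)] x2 by auto
        next
          case False
          then have "q < s x2" using x2 w by auto
          then have "s w \<le> s x2" using wmin[of x2] qx x2 by auto
          then show False using x2 w by auto
        qed
      qed
      ultimately show ?thesis by auto
    qed
    ultimately have "c231 n s" unfolding c231_def using x2 w wn S7
      by (intro exI[of _ x2] exI[of _ w] exI[of _ n]) auto
    then show False using h1 by blast
  qed
  define a where "a = n - q"
  have S8': "p < s y \<and> s y < q" if "q < y" "y \<le> n" for y
    using Cgt[of y] S8[OF that] that pq by auto
  have ad: "n + p + 1 \<le> 2*q"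
  proof -
    have sub: "s ` {q<..n} \<subseteq> {p<..<q}" using S8' by auto
    have "card (s ` {q<..n}) = card {q<..n}"
      using card_image[of s "{q<..n}"] permutes_inj_on[OF perm] by auto
    then have "n - q \<le> q - Suc p" using card_mono[OF _ sub] by auto
    then show ?thesis using q pq by auto
  qed
  have S10: "s y \<le> p + a" if "q < y" "y \<le> n" for y
  proof (rule ccontr)
    assume "\<not> s y \<le> p + a"
    define x where "x = s y"
    have x: "p + a < x" "p < x" "x < q" using S8'[OF that] \<open>\<not> s y \<le> p + a\<close> unfolding x_def by auto
    have sx: "q \<le> s x" using B2[of y] that q unfolding x_def by force
    have sub: "s ` {p<..x} \<subseteq> {q..n-1}"
    proof
      fix v assume "v \<in> s ` {p<..x}"
      then obtain x' where x': "p < x'" "x' \<le> x" "v = s x'" by auto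
      have "s x \<le> s x'" using S5[of x' x] x' x by (cases "x' = x") auto
      moreover have "s x' \<noteq> n" using Bne[of x'] x' by auto
      moreover have "s x' \<le> n" using inS[of x'] x' x q p by auto
      ultimately show "v \<in> {q..n-1}" using sx x' by auto
    qed
    have "card (s ` {p<..x}) = card {p<..x}"
      using card_image[of s "{p<..x}"] permutes_inj_on[OF perm] by auto
    then have "x - p \<le> n - 1 + 1 - q" using card_mono[OF _ sub] by auto
    then show False using x a_def q n1 by auto
  qed
  have S11: "s ` {q<..n} = {p<..p+a}"
  proof (rule card_subset_eq)
    show "s ` {q<..n} \<subseteq> {p<..p+a}" using S8' S10 by auto
    have "card (s ` {q<..n}) = card {q<..n}"
      using card_image[of s "{q<..n}"] permutes_inj_on[OF perm] by auto
    then show "card (s ` {q<..n}) = card {p<..p+a}" using a_def by auto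
  qed auto
  have S12: "p + a < s x \<and> s x \<le> n - 1" if "p < x" "x < q" for x
  proof -
    have "p < s x" using Cgt[of x] that q by auto
    moreover have "s x \<le> n - 1" using Bne[of x] inS[of x] that q p by auto
    moreover have "\<not> s x \<le> p + a"
    proof
      assume "s x \<le> p + a"
      then have "s x \<in> s ` {q<..n}" using S11 \<open>p < s x\<close> by auto
      then obtain y where "q < y" "y \<le> n" "s x = s y" by auto
      then show False using inj[of x y] that by auto
    qed
    ultimately show ?thesis by auto
  qed
  have S13: "s x + x = n + p" if "p < x" "x < q" for x
  proof -
    have "s x + x = (n - 1) + (p + 1)"
    proof (rule DEC[of "p + 1" "q - 1" s "p + a + 1" "n - 1"])
      show "\<And>x y. p + 1 \<le> x \<Longrightarrow> x < y \<Longrightarrow> y \<le> q - 1 \<Longrightarrow> s y < s x" using S5 by auto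
      show "\<And>x. p + 1 \<le> x \<Longrightarrow> x \<le> q - 1 \<Longrightarrow> p + a + 1 \<le> s x \<and> s x \<le> n - 1"
      proof -
        fix x assume "p + 1 \<le> x" "x \<le> q - 1"
        then have "p < x" "x < q" using pq by auto
        then show "p + a + 1 \<le> s x \<and> s x \<le> n - 1" using S12 by fastforce
      qed
      show "p + a + 1 + (q - 1) = n - 1 + (p + 1)" using a_def pq q by auto
    qed (use that in auto)
    then show ?thesis using n1 by auto
  qed
  have tval: "s (s (p + n - y)) = s y" if "q \<le> y" "y \<le> n" for y
  proof (cases "y = n")
    case True then show ?thesis using p by auto
  next
    case False
    have "p < p + n - y" "p + n - y < q" using that False ad by auto
    then have "s (p + n - y) = y" using S13[of "p + n - y"] that by auto
    then show ?thesis by simp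
  qed
  have S14: "s y < s y'" if "q < y" "y < y'" "y' \<le> n" for y y'
  proof (rule ccontr)
    assume "\<not> s y < s y'"
    then have le: "s y' \<le> s y" by auto
    have i1: "1 \<le> p + n - y'" using p that by auto
    have i2: "p + n - y' < p + n - y" "p + n - y < p + n - q" "p + n - q \<le> n" using that ad q pq by auto
    have e1: "s (s (p + n - y')) = s y'" using tval[of y'] that by auto
    have e2: "s (s (p + n - y)) = s y" using tval[of y] that by auto
    have e3: "s (s (p + n - q)) = p" using tval[of q] q pq by auto
    have v: "p < s y'" "p < s y" using S8' that by auto
    have c: "c231 n (s \<circ> s)" unfolding c231_def
      by (intro exI[of _ "p + n - y'"] exI[of _ "p + n - y"] exI[of _ "p + n - q"])
        (simp only: comp_apply e1 e2 e3; use i1 i2 v le in auto)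
    then show False using h3 by blast
  qed
  have S15: "s y + (q + 1) = y + (p + 1)" if "q < y" "y \<le> n" for y
  proof (rule INC[of "q + 1" n s "p + 1" "p + a"])
    show "\<And>x y. q + 1 \<le> x \<Longrightarrow> x < y \<Longrightarrow> y \<le> n \<Longrightarrow> s x < s y" using S14 by auto
    show "\<And>x. q + 1 \<le> x \<Longrightarrow> x \<le> n \<Longrightarrow> p + 1 \<le> s x \<and> s x \<le> p + a"
    proof -
      fix x assume "q + 1 \<le> x" "x \<le> n"
      then have "q < x" "x \<le> n" by auto
      then show "p + 1 \<le> s x \<and> s x \<le> p + a" using S8' S10 by fastforce
    qed
    show "p + a + (q + 1) = p + 1 + n" using a_def q by auto
  qed (use that in auto)
  have "s = P n p q"
  proof
    fix i
    consider "i = 0 \<or> n < i" | "1 \<le> i \<and> i < p" | "i = p" | "p < i \<and> i < q" | "i = q" | "q < i \<and> i \<le> n"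
      by linarith
    then show "s i = P n p q i"
    proof cases
      case 1 then show ?thesis using perm_out[OF perm 1] unfolding P_def by auto
    next
      case 2 then show ?thesis using S3[of i] pn unfolding P_def by auto
    next
      case 3 then show ?thesis using p pq unfolding P_def by auto
    next
      case 4 then show ?thesis using S13[of i] pq q unfolding P_def by auto
    next
      case 5 then show ?thesis using q pq unfolding P_def by auto
    next
      case 6 then show ?thesis using S15[of i] pq unfolding P_def by auto
    qed
  qed
  then show ?thesis using p pq q ad by blast
qed

definition Sset :: "nat \<Rightarrow> (nat \<Rightarrow> nat) set" where
  "Sset n = {s. s permutes {1..n} \<and> \<not> c231 n s \<and> \<not> c1243 n s \<and> \<not> c231 n (s \<circ> s)}"
definition Qset :: "nat \<Rightarrow> (nat \<times> nat) set" where
  "Qset n = {(p,q). 1 \<le> p \<and> p < q \<and> q \<le> n \<and> n + p + 1 \<le> 2*q}"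

lemma mono231: "c231 m s \<Longrightarrow> m \<le> n \<Longrightarrow> c231 n s"
  unfolding c231_def by (meson order_trans)
lemma mono1243: "c1243 m s \<Longrightarrow> m \<le> n \<Longrightarrow> c1243 n s"
  unfolding c1243_def by (meson order_trans)

lemma restr231:
  fixes s :: "nat \<Rightarrow> nat"
  assumes "s n = n" "\<And>x. 1 \<le> x \<Longrightarrow> x < n \<Longrightarrow> s x < n" "c231 n s"
  shows "c231 (n - 1) s"
proof -
  obtain x y z where H: "1 \<le> x" "x < y" "y < z" "z \<le> n" "s x \<le> s y" "s z < s x" "s z < s y"
    using assms(3) unfolding c231_def by blast
  have "z \<noteq> n" using H assms(1) assms(2)[of x] by auto
  then show ?thesis unfolding c231_def using H by (intro exI[of _ x] exI[of _ y] exI[of _ z]) auto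
qed

lemma restr1243:
  fixes s :: "nat \<Rightarrow> nat"
  assumes "s n = n" "\<And>x. 1 \<le> x \<Longrightarrow> x < n \<Longrightarrow> s x < n" "c1243 n s"
  shows "c1243 (n - 1) s"
proof -
  obtain a b c d where H: "1 \<le> a" "a < b" "b < c" "c < d" "d \<le> n" "s a \<le> s b" "s a \<le> s c" "s a \<le> s d"
     "s b \<le> s c" "s b \<le> s d" "s d < s c"
    using assms(3) unfolding c1243_def by blast
  have "d \<noteq> n" using H assms(1) assms(2)[of c] by auto
  then show ?thesis unfolding c1243_def using H
    by (intro exI[of _ a] exI[of _ b] exI[of _ c] exI[of _ d]) auto
qed

lemma P_at_p: "1 \<le> p \<Longrightarrow> p < q \<Longrightarrow> q \<le> n \<Longrightarrow> P n p q p = n"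
  unfolding P_def by auto
lemma P_at_q: "1 \<le> p \<Longrightarrow> p < q \<Longrightarrow> q \<le> n \<Longrightarrow> P n p q q = p"
  unfolding P_def by auto
lemma P_at_n: "1 \<le> p \<Longrightarrow> p < q \<Longrightarrow> q \<le> n \<Longrightarrow> P n p q n \<noteq> n"
  unfolding P_def by auto

lemma P_inj_param: "inj_on (\<lambda>(p,q). P n p q) (Qset n)"
proof (rule inj_onI)
  fix x y assume "x \<in> Qset n" "y \<in> Qset n" "(\<lambda>(p,q). P n p q) x = (\<lambda>(p,q). P n p q) y"
  then obtain p q p' q' where xy: "x = (p,q)" "y = (p',q')" and
    a: "1 \<le> p" "p < q" "q \<le> n" "n + p + 1 \<le> 2 * q" "1 \<le> p'" "p' < q'" "q' \<le> n"
    "n + p' + 1 \<le> 2 * q'" and eq: "P n p q = P n p' q'" unfolding Qset_def by auto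

  have "P n p' q' p = n" using P_at_p[of p q n] a eq by metis
  then have pp: "p = p'" using a unfolding P_def by (auto split: if_splits)
  have "P n p q' q = p" using P_at_q[of p q n] a eq pp by metis
  then have "q = q'" using a pp unfolding P_def by (auto split: if_splits)
  then show "x = y" using pp xy by auto
qed

lemma finite_Qset: "finite (Qset n)"
proof -
  have "Qset n \<subseteq> {0..n} \<times> {0..n}" unfolding Qset_def by auto
  then show ?thesis by (rule finite_subset) auto
qed

lemma finite_Sset: "finite (Sset n)"
proof -
  have "Sset n \<subseteq> {s. s permutes {1..n}}" unfolding Sset_def by auto
  then show ?thesis using finite_permutations[of "{1..n}"] by (auto intro: finite_subset)
qed

lemma Sset_split:
  assumes n: "1 \<le> n"
  shows "Sset n = Sset (n - 1) \<union> (\<lambda>(p,q). P n p q) ` Qset n"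
proof
  show "Sset n \<subseteq> Sset (n - 1) \<union> (\<lambda>(p,q). P n p q) ` Qset n"
  proof
    fix s assume "s \<in> Sset n"
    then have perm: "s permutes {1..n}" and h1: "\<not> c231 n s" and h2: "\<not> c1243 n s"
      and h3: "\<not> c231 n (s \<circ> s)" unfolding Sset_def by auto
    show "s \<in> Sset (n - 1) \<union> (\<lambda>(p,q). P n p q) ` Qset n"
    proof (cases "s n = n")
      case True
      have "s permutes {1..n-1}"
      proof (rule permutes_superset[OF perm])
        fix x assume "x \<in> {1..n} - {1..n-1}"
        then have "x = n" by auto
        then show "s x = x" using True by simp
      qed
      moreover have "n - 1 \<le> n" by auto
      ultimately have "s \<in> Sset (n - 1)" unfolding Sset_def
        using h1 h2 h3 mono231 mono1243 by blast
      then show ?thesis by blast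
    next
      case False
      from struct_thm[OF perm h1 h2 h3 False] obtain p q where
        "1 \<le> p" "p < q" "q \<le> n" "n + p + 1 \<le> 2*q" "s = P n p q" by blast
      then have "(p,q) \<in> Qset n" "s = (\<lambda>(p,q). P n p q) (p,q)" unfolding Qset_def by auto
      then show ?thesis by blast
    qed
  qed
next
  show "Sset (n - 1) \<union> (\<lambda>(p,q). P n p q) ` Qset n \<subseteq> Sset n"
  proof
    fix s assume "s \<in> Sset (n - 1) \<union> (\<lambda>(p,q). P n p q) ` Qset n"
    then consider "s \<in> Sset (n - 1)" | "s \<in> (\<lambda>(p,q). P n p q) ` Qset n" by blast
    then show "s \<in> Sset n"
    proof cases
      case 1
      then have perm: "s permutes {1..n-1}" and h1: "\<not> c231 (n-1) s" and h2: "\<not> c1243 (n-1) s"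
        and h3: "\<not> c231 (n-1) (s \<circ> s)" unfolding Sset_def by auto
      have perm': "s permutes {1..n}" by (rule permutes_subset[OF perm]) auto
      have sn: "s n = n" using perm_out[OF perm, of n] n by auto
      have lt: "s x < n" if "1 \<le> x" "x < n" for x
      proof -
        have "x \<le> n - 1" using that by auto
        then show ?thesis using perm_in[OF perm, of x] that by auto
      qed
      have lt2: "(s \<circ> s) x < n" if "1 \<le> x" "x < n" for x
      proof -
        have "x \<le> n - 1" using that by auto
        then have "1 \<le> s x" "s x \<le> n - 1" using perm_in[OF perm, of x] that by auto
        then show ?thesis using perm_in[OF perm, of "s x"] by auto
      qed
      have sn2: "(s \<circ> s) n = n" using sn by auto
      show ?thesis unfolding Sset_def using perm' restr231[of s n, OF sn lt] restr1243[of s n, OF sn lt]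
          restr231[of "s \<circ> s" n, OF sn2 lt2] h1 h2 h3 by blast
    next
      case 2
      then obtain p q where Q: "1 \<le> p" "p < q" "q \<le> n" "n + p + 1 \<le> 2*q" and s: "s = P n p q"
        unfolding Qset_def by auto
      show ?thesis unfolding Sset_def s using P_perm[OF Q] P_231[OF Q] P_1243[OF Q] T_231[OF Q] P_sq[OF Q]
        by auto
    qed
  qed
qed

lemma card_Sset_step:
  assumes n: "1 \<le> n"
  shows "card (Sset n) = card (Sset (n - 1)) + card (Qset n)"
proof -
  have disj: "Sset (n - 1) \<inter> (\<lambda>(p,q). P n p q) ` Qset n = {}"
  proof (rule ccontr)
    assume "Sset (n - 1) \<inter> (\<lambda>(p,q). P n p q) ` Qset n \<noteq> {}"
    then obtain p q where Q: "(p,q) \<in> Qset n" and s: "P n p q \<in> Sset (n - 1)" by auto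
    then have "P n p q permutes {1..n-1}" unfolding Sset_def by auto
    then have "P n p q n = n" using perm_out[of "P n p q" "n - 1" n] n by auto
    then show False using P_at_n[of p q n] Q unfolding Qset_def by auto
  qed
  have "card (Sset n) = card (Sset (n - 1)) + card ((\<lambda>(p,q). P n p q) ` Qset n)"
    unfolding Sset_split[OF n]
    by (rule card_Un_disjoint) (use finite_Sset finite_Qset disj in auto)
  also have "card ((\<lambda>(p,q). P n p q) ` Qset n) = card (Qset n)"
    using card_image[OF P_inj_param] .
  finally show ?thesis .
qed

lemma Sset0: "card (Sset 0) = 1"
proof -
  have "Sset 0 = {id}" unfolding Sset_def c231_def c1243_def by auto
  then show ?thesis by simp
qed

lemma Qset_step: "card (Qset (Suc n)) = card (Qset n) + (n + 1) div 2"
proof -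
  have eq: "Qset (Suc n) = (\<lambda>(p,q). (Suc p, Suc q)) ` Qset n \<union> ({1} \<times> {(n + 4) div 2 .. n + 1})"
  proof
    show "Qset (Suc n) \<subseteq> (\<lambda>(p,q). (Suc p, Suc q)) ` Qset n \<union> ({1} \<times> {(n + 4) div 2 .. n + 1})"
    proof
      fix x assume "x \<in> Qset (Suc n)"
      then obtain p q where x: "x = (p,q)" "1 \<le> p" "p < q" "q \<le> Suc n" "Suc n + p + 1 \<le> 2*q"
        unfolding Qset_def by auto
      show "x \<in> (\<lambda>(p,q). (Suc p, Suc q)) ` Qset n \<union> ({1} \<times> {(n + 4) div 2 .. n + 1})"
      proof (cases "p = 1")
        case True then show ?thesis using x by auto
      next
        case False
        then have "(p - 1, q - 1) \<in> Qset n" using x unfolding Qset_def by auto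
        moreover have "x = (\<lambda>(p,q). (Suc p, Suc q)) (p - 1, q - 1)" using x False by auto
        ultimately show ?thesis by blast
      qed
    qed
    show "(\<lambda>(p,q). (Suc p, Suc q)) ` Qset n \<union> ({1} \<times> {(n + 4) div 2 .. n + 1}) \<subseteq> Qset (Suc n)"
      unfolding Qset_def by auto
  qed
  have disj: "(\<lambda>(p,q). (Suc p, Suc q)) ` Qset n \<inter> ({1} \<times> {(n + 4) div 2 .. n + 1}) = {}"
    unfolding Qset_def by auto
  have inj: "inj_on (\<lambda>(p,q). (Suc p, Suc q)) (Qset n)" by (auto simp: inj_on_def)
  have "card (Qset (Suc n)) = card (Qset n) + card ({1::nat} \<times> {(n + 4) div 2 .. n + 1})"
    unfolding eq
    by (subst card_Un_disjoint) (use finite_Qset disj card_image[OF inj] in auto)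
  also have "card ({1::nat} \<times> {(n + 4) div 2 .. n + 1}) = (n + 1) div 2"
    by (simp add: card_cartesian_product)
  finally show ?thesis .
qed

lemma Qset0: "card (Qset 0) = 0"
proof -
  have "Qset 0 = {}" unfolding Qset_def by auto
  then show ?thesis by simp
qed

lemma g_closed: "card (Qset (2*k)) = k*k \<and> card (Qset (2*k+1)) = k*k + k"
proof (induction k)
  case 0 then show ?case using Qset_step[of 0] Qset0 by simp
next
  case (Suc k)
  have a: "card (Qset (2 * Suc k)) = card (Qset (2*k+1)) + (2*k+2) div 2"
    using Qset_step[of "2*k+1"] by simp
  have b: "card (Qset (2 * Suc k + 1)) = card (Qset (2 * Suc k)) + (2*k+3) div 2"
    using Qset_step[of "2*Suc k"] by simp
  have c1: "(2*k+2) div 2 = k + 1" by simp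
  have c2: "(2*k+3) div 2 = k + 1" by simp
  show ?case using a b c1 c2 Suc.IH by (simp add: algebra_simps)
qed

lemma c_closed: "6 * card (Sset (2*k)) + k = 4*k*k*k + 3*k*k + 6 \<and>
   6 * card (Sset (2*k+1)) = 4*k*k*k + 9*k*k + 5*k + 6"
proof (induction k)
  case 0 then show ?case using card_Sset_step[of 1] Sset0 Qset_step[of 0] Qset0 by simp
next
  case (Suc k)
  have a: "card (Sset (2 * Suc k)) = card (Sset (2*k+1)) + (k+1)*(k+1)"
    using card_Sset_step[of "2 * Suc k"] g_closed[of "Suc k"] by simp
  have b: "card (Sset (2 * Suc k + 1)) = card (Sset (2 * Suc k)) + ((k+1)*(k+1) + (k+1))"
    using card_Sset_step[of "2 * Suc k + 1"] g_closed[of "Suc k"] by simp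
  show ?case using a b Suc.IH by (simp add: algebra_simps)
qed

definition rc :: "nat \<Rightarrow> (nat \<Rightarrow> nat) \<Rightarrow> nat \<Rightarrow> nat" where
  "rc n s i = (if 1 \<le> i \<and> i \<le> n then n + 1 - s (n + 1 - i) else i)"

lemma rc_in: "s permutes {1..n} \<Longrightarrow> 1 \<le> i \<Longrightarrow> i \<le> n \<Longrightarrow> rc n s i = n + 1 - s (n + 1 - i) \<and> 1 \<le> s (n + 1 - i) \<and> s (n + 1 - i) \<le> n"
  using perm_in[of s n "n + 1 - i"] unfolding rc_def by auto

lemma rc_perm:
  assumes perm: "s permutes {1..n}"
  shows "rc n s permutes {1..n}"
proof (rule bij_imp_permutes)
  have i: "inj_on (rc n s) {1..n}"
  proof (rule inj_onI)
    fix x y assume "x \<in> {1..n}" "y \<in> {1..n}" "rc n s x = rc n s y"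
    then have xy: "x \<in> {1..n}" "y \<in> {1..n}" "rc n s x = rc n s y" by auto
    have e: "rc n s x = n + 1 - s (n + 1 - x)" "s (n + 1 - x) \<le> n"
      "rc n s y = n + 1 - s (n + 1 - y)" "s (n + 1 - y) \<le> n"
      using rc_in[OF perm, of x] rc_in[OF perm, of y] xy by auto
    then have "s (n + 1 - x) = s (n + 1 - y)" using xy(3) by arith
    then have "n + 1 - x = n + 1 - y" using perm_inj[OF perm] by blast
    then show "x = y" using xy by auto
  qed
  have sub: "rc n s ` {1..n} \<subseteq> {1..n}" using rc_in[OF perm] by fastforce
  show "bij_betw (rc n s) {1..n} {1..n}"
    using endo_inj_surj[OF _ sub i] i by (simp add: bij_betw_def)
  show "\<And>x. x \<notin> {1..n} \<Longrightarrow> rc n s x = x" unfolding rc_def by auto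
qed

lemma rc_rc:
  assumes perm: "s permutes {1..n}"
  shows "rc n (rc n s) = s"
proof
  fix i show "rc n (rc n s) i = s i"
  proof (cases "1 \<le> i \<and> i \<le> n")
    case True
    have "rc n (rc n s) i = n + 1 - rc n s (n + 1 - i)" using True unfolding rc_def by auto
    also have "rc n s (n + 1 - i) = n + 1 - s i" using rc_in[OF perm, of "n + 1 - i"] True by auto
    also have "n + 1 - (n + 1 - s i) = s i" using perm_in[OF perm, of i] True by auto
    finally show ?thesis .
  next
    case False
    then show ?thesis using perm_out[OF perm, of i] unfolding rc_def by auto
  qed
qed

lemma rc_comp:
  assumes perm: "s permutes {1..n}"
  shows "rc n (s \<circ> s) = rc n s \<circ> rc n s"
proof
  fix i show "rc n (s \<circ> s) i = (rc n s \<circ> rc n s) i"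
  proof (cases "1 \<le> i \<and> i \<le> n")
    case True
    have a: "rc n s i = n + 1 - s (n + 1 - i)" "1 \<le> s (n + 1 - i)" "s (n + 1 - i) \<le> n"
      using rc_in[OF perm, of i] True by auto
    have "(rc n s \<circ> rc n s) i = rc n s (n + 1 - s (n + 1 - i))" using a by simp
    also have "\<dots> = n + 1 - s (s (n + 1 - i))" using a unfolding rc_def by auto
    finally show ?thesis using True unfolding rc_def by auto
  next
    case False
    then show ?thesis unfolding rc_def by auto
  qed
qed

lemma flip_le: "a \<le> n \<Longrightarrow> b \<le> n \<Longrightarrow> (n + 1 - a \<le> n + 1 - b) = (b \<le> (a::nat))" by auto
lemma flip_lt: "a \<le> n \<Longrightarrow> b \<le> n \<Longrightarrow> (n + 1 - a < n + 1 - b) = (b < (a::nat))" by auto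
lemma flip_le': "a \<le> n \<Longrightarrow> b \<le> n \<Longrightarrow> (Suc n - a \<le> Suc n - b) = (b \<le> (a::nat))" by auto
lemma flip_lt': "a \<le> n \<Longrightarrow> b \<le> n \<Longrightarrow> (Suc n - a < Suc n - b) = (b < (a::nat))" by auto

lemma rc_312:
  assumes perm: "s permutes {1..n}"
  shows "c312 n s \<longleftrightarrow> c231 n (rc n s)"
proof
  assume "c312 n s"
  then obtain x y z where H: "1 \<le> x" "x < y" "y < z" "z \<le> n" "s y < s x" "s z < s x" "s y \<le> s z"
    unfolding c312_def by blast
  have r: "rc n s (n + 1 - z) = n + 1 - s z" "rc n s (n + 1 - y) = n + 1 - s y" "rc n s (n + 1 - x) = n + 1 - s x"
    using H unfolding rc_def by auto
  have b: "s x \<le> n" "s y \<le> n" "s z \<le> n" using perm_in[OF perm, of x] perm_in[OF perm, of y] perm_in[OF perm, of z] H by auto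
  have i: "1 \<le> n + 1 - z" "n + 1 - z < n + 1 - y" "n + 1 - y < n + 1 - x" "n + 1 - x \<le> n"
    using H by arith+
  have v: "rc n s (n + 1 - z) \<le> rc n s (n + 1 - y)" "rc n s (n + 1 - x) < rc n s (n + 1 - z)"
    "rc n s (n + 1 - x) < rc n s (n + 1 - y)"
    unfolding r using H b by (simp_all add: flip_le flip_lt flip_le' flip_lt')
  show "c231 n (rc n s)" unfolding c231_def using i v by blast
next
  assume "c231 n (rc n s)"
  then obtain x y z where H: "1 \<le> x" "x < y" "y < z" "z \<le> n" "rc n s x \<le> rc n s y"
    "rc n s z < rc n s x" "rc n s z < rc n s y"
    unfolding c231_def by blast
  have r: "rc n s x = n + 1 - s (n + 1 - x)" "rc n s y = n + 1 - s (n + 1 - y)" "rc n s z = n + 1 - s (n + 1 - z)"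
    using H unfolding rc_def by auto
  have b: "s (n + 1 - x) \<le> n" "s (n + 1 - y) \<le> n" "s (n + 1 - z) \<le> n"
    using perm_in[OF perm, of "n + 1 - x"] perm_in[OF perm, of "n + 1 - y"] perm_in[OF perm, of "n + 1 - z"] H by auto
  have i: "1 \<le> n + 1 - z" "n + 1 - z < n + 1 - y" "n + 1 - y < n + 1 - x" "n + 1 - x \<le> n"
    using H by arith+
  have v: "s (n + 1 - y) < s (n + 1 - z)" "s (n + 1 - x) < s (n + 1 - z)" "s (n + 1 - y) \<le> s (n + 1 - x)"
    using H(5,6,7) b unfolding r by (simp_all add: flip_le flip_lt flip_le' flip_lt')
  show "c312 n s" unfolding c312_def using i v by blast
qed

lemma rc_2134:
  assumes perm: "s permutes {1..n}"
  shows "c2134 n s \<longleftrightarrow> c1243 n (rc n s)"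
proof
  assume "c2134 n s"
  then obtain a b c d where H: "1 \<le> a" "a < b" "b < c" "c < d" "d \<le> n"
     "s b < s a" "s a \<le> s c" "s a \<le> s d" "s b \<le> s c" "s b \<le> s d" "s c \<le> s d"
    unfolding c2134_def by blast
  have r: "rc n s (n + 1 - d) = n + 1 - s d" "rc n s (n + 1 - c) = n + 1 - s c"
     "rc n s (n + 1 - b) = n + 1 - s b" "rc n s (n + 1 - a) = n + 1 - s a"
    using H unfolding rc_def by auto
  have bd: "s a \<le> n" "s b \<le> n" "s c \<le> n" "s d \<le> n"
    using perm_in[OF perm, of a] perm_in[OF perm, of b] perm_in[OF perm, of c] perm_in[OF perm, of d] H by auto
  have i: "1 \<le> n + 1 - d" "n + 1 - d < n + 1 - c" "n + 1 - c < n + 1 - b" "n + 1 - b < n + 1 - a"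
    "n + 1 - a \<le> n" using H by arith+
  have v: "rc n s (n + 1 - d) \<le> rc n s (n + 1 - c)" "rc n s (n + 1 - d) \<le> rc n s (n + 1 - b)"
    "rc n s (n + 1 - d) \<le> rc n s (n + 1 - a)" "rc n s (n + 1 - c) \<le> rc n s (n + 1 - b)"
    "rc n s (n + 1 - c) \<le> rc n s (n + 1 - a)" "rc n s (n + 1 - a) < rc n s (n + 1 - b)"
    unfolding r using H bd by (simp_all add: flip_le flip_lt flip_le' flip_lt')
  show "c1243 n (rc n s)" unfolding c1243_def using i v by blast
next
  assume "c1243 n (rc n s)"
  then obtain a b c d where H: "1 \<le> a" "a < b" "b < c" "c < d" "d \<le> n"
     "rc n s a \<le> rc n s b" "rc n s a \<le> rc n s c" "rc n s a \<le> rc n s d" "rc n s b \<le> rc n s c"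
     "rc n s b \<le> rc n s d" "rc n s d < rc n s c"
    unfolding c1243_def by blast
  have r: "rc n s a = n + 1 - s (n + 1 - a)" "rc n s b = n + 1 - s (n + 1 - b)"
    "rc n s c = n + 1 - s (n + 1 - c)" "rc n s d = n + 1 - s (n + 1 - d)"
    using H unfolding rc_def by auto
  have bd: "s (n + 1 - a) \<le> n" "s (n + 1 - b) \<le> n" "s (n + 1 - c) \<le> n" "s (n + 1 - d) \<le> n"
    using perm_in[OF perm, of "n + 1 - a"] perm_in[OF perm, of "n + 1 - b"] perm_in[OF perm, of "n + 1 - c"] perm_in[OF perm, of "n + 1 - d"] H by auto
  have i: "1 \<le> n + 1 - d" "n + 1 - d < n + 1 - c" "n + 1 - c < n + 1 - b" "n + 1 - b < n + 1 - a"
    "n + 1 - a \<le> n" using H by arith+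
  have v: "s (n + 1 - c) < s (n + 1 - d)" "s (n + 1 - d) \<le> s (n + 1 - b)" "s (n + 1 - d) \<le> s (n + 1 - a)"
    "s (n + 1 - c) \<le> s (n + 1 - b)" "s (n + 1 - c) \<le> s (n + 1 - a)" "s (n + 1 - b) \<le> s (n + 1 - a)"
    using H(6-11) bd unfolding r by (simp_all add: flip_le flip_lt flip_le' flip_lt')
  show "c2134 n s" unfolding c2134_def using i v by blast
qed

definition Sset2 :: "nat \<Rightarrow> (nat \<Rightarrow> nat) set" where
  "Sset2 n = {s. s permutes {1..n} \<and> \<not> c312 n s \<and> \<not> c2134 n s \<and> \<not> c312 n (s \<circ> s)}"

lemma Sset2_eq: "Sset2 n = rc n ` Sset n"
proof
  show "rc n ` Sset n \<subseteq> Sset2 n"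
  proof
    fix t assume "t \<in> rc n ` Sset n"
    then obtain s where s: "s \<in> Sset n" "t = rc n s" by auto
    then have perm: "s permutes {1..n}" and h: "\<not> c231 n s" "\<not> c1243 n s" "\<not> c231 n (s \<circ> s)"
      unfolding Sset_def by auto
    have pt: "t permutes {1..n}" using rc_perm[OF perm] s by simp
    have pt2: "(t \<circ> t) permutes {1..n}" using permutes_compose[OF pt pt] .
    have tt: "rc n t = s" using rc_rc[OF perm] s(2) by simp
    have tt2: "rc n (t \<circ> t) = s \<circ> s" using rc_comp[OF pt] tt by simp
    have "\<not> c312 n t" using rc_312[OF pt] tt h(1) by simp
    moreover have "\<not> c2134 n t" using rc_2134[OF pt] tt h(2) by simp
    moreover have "\<not> c312 n (t \<circ> t)" using rc_312[OF pt2] tt2 h(3) by simp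
    ultimately show "t \<in> Sset2 n" unfolding Sset2_def using pt by auto
  qed
  show "Sset2 n \<subseteq> rc n ` Sset n"
  proof
    fix t assume "t \<in> Sset2 n"
    then have pt: "t permutes {1..n}" and h: "\<not> c312 n t" "\<not> c2134 n t" "\<not> c312 n (t \<circ> t)"
      unfolding Sset2_def by auto
    have pt2: "(t \<circ> t) permutes {1..n}" using permutes_compose[OF pt pt] .
    have a: "\<not> c231 n (rc n t)" using rc_312[OF pt] h(1) by blast
    have b: "\<not> c1243 n (rc n t)" using rc_2134[OF pt] h(2) by blast
    have c0: "\<not> c231 n (rc n (t \<circ> t))" using rc_312[OF pt2] h(3) by blast
    have c: "\<not> c231 n (rc n t \<circ> rc n t)" using c0 unfolding rc_comp[OF pt] .
    have "rc n t \<in> Sset n" unfolding Sset_def using rc_perm[OF pt] a b c by blast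
    moreover have "t = rc n (rc n t)" using rc_rc[OF pt] by simp
    ultimately show "t \<in> rc n ` Sset n" by blast
  qed
qed

lemma card_Sset2: "card (Sset2 n) = card (Sset n)"
proof -
  have "inj_on (rc n) (Sset n)"
  proof (rule inj_onI)
    fix s t assume a: "s \<in> Sset n" "t \<in> Sset n" "rc n s = rc n t"
    have "s permutes {1..n}" "t permutes {1..n}" using a(1,2) unfolding Sset_def by auto
    then have e: "rc n (rc n s) = s" "rc n (rc n t) = t" using rc_rc by auto
    have "rc n (rc n s) = rc n (rc n t)" using a(3) by simp
    then show "s = t" using e by simp
  qed
  then show ?thesis unfolding Sset2_eq by (rule card_image)
qed

lemma cc1: "c_count n [2,3,1] [1,2,4,3] [2,3,1] = card (Sset n)"
  unfolding c_count_def Sset_def avoids_pat_def u231 u1243 by simp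
lemma cc2: "c_count n [3,1,2] [2,1,3,4] [3,1,2] = card (Sset2 n)"
  unfolding c_count_def Sset2_def avoids_pat_def u312 u2134 by simp

theorem theorem4p3:
  fixes n k :: nat
  assumes "n \<ge> 1"
  shows "c_count n [2,3,1] [1,2,4,3] [2,3,1] = c_count n [3,1,2] [2,1,3,4] [3,1,2]
    \<and> (n = 2*k \<longrightarrow> real (c_count n [2,3,1] [1,2,4,3] [2,3,1])
            = (4 * real k ^ 3 + 3 * real k ^ 2 - real k) / 6 + 1)
    \<and> (n = 2*k + 1 \<longrightarrow> real (c_count n [2,3,1] [1,2,4,3] [2,3,1])
            = (4 * real k ^ 3 + 9 * real k ^ 2 + 5 * real k) / 6 + 1)"
proof (intro conjI impI)
  show "c_count n [2,3,1] [1,2,4,3] [2,3,1] = c_count n [3,1,2] [2,1,3,4] [3,1,2]"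
    unfolding cc1 cc2 card_Sset2 ..
next
  assume n: "n = 2*k"
  have "6 * card (Sset (2*k)) + k = 4*k*k*k + 3*k*k + 6" using c_closed[of k] by blast
  then have "real (6 * card (Sset (2*k)) + k) = real (4*k*k*k + 3*k*k + 6)" by metis
  then have "6 * real (card (Sset (2*k))) + real k = 4 * real k ^ 3 + 3 * real k ^ 2 + 6"
    by (simp add: power2_eq_square power3_eq_cube)
  then show "real (c_count n [2,3,1] [1,2,4,3] [2,3,1]) = (4 * real k ^ 3 + 3 * real k ^ 2 - real k) / 6 + 1"
    unfolding cc1 n by (simp add: field_simps)
next
  assume n: "n = 2*k + 1"
  have "6 * card (Sset (2*k+1)) = 4*k*k*k + 9*k*k + 5*k + 6" using c_closed[of k] by blast
  then have "real (6 * card (Sset (2*k+1))) = real (4*k*k*k + 9*k*k + 5*k + 6)" by metis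
  then have "6 * real (card (Sset (2*k+1))) = 4 * real k ^ 3 + 9 * real k ^ 2 + 5 * real k + 6"
    by (simp add: power2_eq_square power3_eq_cube)
  then show "real (c_count n [2,3,1] [1,2,4,3] [2,3,1]) = (4 * real k ^ 3 + 9 * real k ^ 2 + 5 * real k) / 6 + 1"
    unfolding cc1 n by (simp add: field_simps)
qed

end
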